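(* Let $(X,+,d)$ be a complete, locally compact Abelian metric group with translation-invariant metric $d$ such that every non-empty open ball in $X$ contains infinitely many elements. Let $A\in K(X)$. Then the spectre operator $S:K(X)\to K(X)$ is continuous at $A$ (with respect to the Pompeiu–Hausdorff metric) if and only if $S(A)=\{0\}$.
   Context: $d$ satisfies $d(x,y)=d(x+z,y+z)$ for all $x,y,z\in X$; $0$ is the neutral element. $K(X)$ is the family of non-empty compact subsets of $X$ with the Pompeiu–Hausdorff metric $d_H(A,B)=\max\{\sup_{a\in A}d(a,B),\sup_{b\in B}d(A,b)\}$. The spectre of $A\subset X$ is $S(A):=\{z\in X:\ \forall_{a\in A}\ (a+z\in A \text{ or } a-z\in A)\}$; it is compact for compact non-empty $A$. *)

theory Defs
  imports "HOL-Analysis.Analysis"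
begin

definition hausdorff_dist :: "'a::metric_space set \<Rightarrow> 'a set \<Rightarrow> real" where
  "hausdorff_dist A B = max (SUP a\<in>A. infdist a B) (SUP b\<in>B. infdist b A)"

definition spectre :: "'a::ab_group_add set \<Rightarrow> 'a set" where
  "spectre A = {z. \<forall>a\<in>A. a + z \<in> A \<or> a - z \<in> A}"

definition Kfam :: "'a::topological_space set set" where
  "Kfam = {A. A \<noteq> {} \<and> compact A}"

end

theory Submission
  imports Defs
begin


locale tinv =
  assumes T: "\<And>x y z :: 'a::{metric_space, ab_group_add}. dist x y = dist (x + z) (y + z)"
begin

lemma L1: "dist (a + s) a = dist s (0::'a)"
  using T[of s 0 a] by (simp add: add.commute)
lemma L2: "dist (a - s) a = dist s (0::'a)"
  using T[of "a - s" a "s - a"] by (simp add: dist_commute)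
lemma L4: "dist (a - s) (b - s) = dist a (b::'a)"
  using T[of a b "-s"] by simp
lemma L5: "dist (a + s) (a + t) = dist s (t::'a)"
  using T[of s t a] by (simp add: add.commute)
lemma L6: "dist (a - s) (a - t) = dist s (t::'a)"
  using T[of "a - s" "a - t" "s + t - a"] by (simp add: dist_commute algebra_simps)
lemma L7: "dist (a - b) (a' - b') \<le> dist a a' + dist b (b'::'a)"
  using dist_triangle[of "a - b" "a' - b'" "a' - b"] L4[of a b a'] L6[of a' b b'] by simp
lemma L8: "dist (a + b) (a' + b') \<le> dist a a' + dist b (b'::'a)"
  using dist_triangle[of "a + b" "a' + b'" "a' + b"] T[of a a' b] L5[of a' b b'] by simp

end


definition weakG :: "'a::ab_group_add set \<Rightarrow> bool" where
  "weakG B \<longleftrightarrow> (\<forall>a\<in>B. \<forall>b\<in>B. \<forall>c\<in>B. \<forall>d\<in>B. a + d = b + c \<longrightarrow> a = b \<or> a = c \<or> a = d \<or> b = c)"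

lemma weakG_empty: "weakG {}" by (simp add: weakG_def)

lemma weakG_insert:
  assumes "weakG B" "x \<notin> B" "\<forall>a\<in>B. \<forall>b\<in>B. \<forall>c\<in>B. a + x \<noteq> b + c"
  shows "weakG (insert x B)"
  unfolding weakG_def
proof (intro ballI impI)
  fix a b c d assume ins: "a \<in> insert x B" "b \<in> insert x B" "c \<in> insert x B" "d \<in> insert x B"
    and eq: "a + d = b + c"
  show "a = b \<or> a = c \<or> a = d \<or> b = c"
  proof -
    have av: "\<And>a b c. a\<in>B \<Longrightarrow> b\<in>B \<Longrightarrow> c\<in>B \<Longrightarrow> a + x \<noteq> b + c \<and> x + a \<noteq> b + c \<and> b + c \<noteq> a + x \<and> b + c \<noteq> x + a"
      using assms(3) by (metis add.commute)
    show ?thesis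
      using ins eq assms(1) av unfolding weakG_def
      by (cases "a = x"; cases "b = x"; cases "c = x"; cases "d = x"; auto)
  qed
qed

lemma bad_finite:
  fixes B :: "'a::ab_group_add set"
  assumes "finite B"
  shows "finite {x. \<exists>a\<in>B. \<exists>b\<in>B. \<exists>c\<in>B. a + x = b + c}"
proof -
  have "{x. \<exists>a\<in>B. \<exists>b\<in>B. \<exists>c\<in>B. a + x = b + c} \<subseteq> (\<lambda>(a,b,c). b + c - a) ` (B \<times> B \<times> B)"
  proof
    fix x assume "x \<in> {x. \<exists>a\<in>B. \<exists>b\<in>B. \<exists>c\<in>B. a + x = b + c}"
    then obtain a b c where "a\<in>B" "b\<in>B" "c\<in>B" "a + x = b + c" by blast
    then have "x = (\<lambda>(a,b,c). b + c - a) (a,b,c)" by (simp add: algebra_simps)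
    then show "x \<in> (\<lambda>(a,b,c). b + c - a) ` (B \<times> B \<times> B)" using \<open>a\<in>B\<close> \<open>b\<in>B\<close> \<open>c\<in>B\<close> by blast
  qed
  then show ?thesis using assms by (meson finite_SigmaI finite_imageI finite_subset)
qed

lemma intersect:
  fixes w :: "'a::ab_group_add"
  assumes G: "weakG B" and w: "w \<noteq> 0" and mem: "p \<in> B" "q \<in> B" "p' \<in> B" "q' \<in> B"
    and q: "q = p + w \<or> q = p - w" and q': "q' = p' + w \<or> q' = p' - w" and ne: "p \<noteq> p'"
  shows "p = q' \<or> q = p' \<or> q = q'"
proof -
  have qp: "q \<noteq> p" using q w by auto
  from q q' have "p + q' = q + p' \<or> q + q' = p + p'" by (auto simp: algebra_simps)
  then show ?thesis
  proof
    assume "p + q' = q + p'"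
    then show ?thesis using G mem qp ne unfolding weakG_def by metis
  next
    assume "q + q' = p + p'"
    then show ?thesis using G mem qp ne unfolding weakG_def by metis
  qed
qed

lemma spectre_weakG:
  fixes B :: "'a::ab_group_add set"
  assumes fin: "finite B" and G: "weakG B" and c4: "card B \<ge> 4"
  shows "spectre B = {0}"
proof
  show "{0} \<subseteq> spectre B" by (simp add: spectre_def)
  show "spectre B \<subseteq> {0}"
  proof
    fix w assume ws: "w \<in> spectre B"
    show "w \<in> {0}"
    proof (rule ccontr)
      assume "w \<notin> {0}" then have w: "w \<noteq> 0" by simp
      have part: "\<And>p. p \<in> B \<Longrightarrow> \<exists>q\<in>B. q = p + w \<or> q = p - w"
        using ws unfolding spectre_def by auto
      have "B \<noteq> {}" using c4 by auto
      then obtain p1 where p1: "p1 \<in> B" by blast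
      obtain q1 where q1: "q1 \<in> B" "q1 = p1 + w \<or> q1 = p1 - w" using part[OF p1] by blast
      have "card (B - {p1, q1}) \<ge> 2"
      proof -
        have "card (B - {p1,q1}) = card B - card {p1,q1}" using p1 q1 fin by (simp add: card_Diff_subset)
        moreover have "card {p1,q1} \<le> 2" by (simp add: card_insert_le_m1)
        ultimately show ?thesis using c4 by linarith
      qed
      then obtain pi pj where pij: "pi \<in> B - {p1,q1}" "pj \<in> B - {p1,q1}" "pi \<noteq> pj"
        by (metis card_le_Suc0_iff_eq not_less_eq_eq numeral_2_eq_2 finite_Diff fin)
      obtain qi where qi: "qi \<in> B" "qi = pi + w \<or> qi = pi - w" using part pij by blast
      obtain qj where qj: "qj \<in> B" "qj = pj + w \<or> qj = pj - w" using part pij by blast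
      have "pi = q1 \<or> qi = p1 \<or> qi = q1"
        using intersect[OF G w _ _ p1 q1(1) qi(2) q1(2)] pij qi by auto
      then have qiin: "qi = p1 \<or> qi = q1" using pij by auto
      have "pj = q1 \<or> qj = p1 \<or> qj = q1"
        using intersect[OF G w _ _ p1 q1(1) qj(2) q1(2)] pij qj by auto
      then have qjin: "qj = p1 \<or> qj = q1" using pij by auto
      have "pi = qj \<or> qi = pj \<or> qi = qj"
        using intersect[OF G w _ _ _ _ qi(2) qj(2)] pij qi qj by auto
      then have m: "qi = qj" using pij qiin qjin by auto
      have pipj: "(pi = qi - w \<and> pj = qi + w) \<or> (pi = qi + w \<and> pj = qi - w)"
        using qi(2) qj(2) m pij(3) by (auto simp: algebra_simps)
      have "p1 = qi + w \<or> p1 = qi - w \<or> q1 = qi + w \<or> q1 = qi - w"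
        using qiin q1(2) by (auto simp: algebra_simps)
      moreover have "p1 = qi \<or> q1 = qi" using qiin by auto
      ultimately have "(p1 = qi \<and> (q1 = qi + w \<or> q1 = qi - w)) \<or> (q1 = qi \<and> (p1 = qi + w \<or> p1 = qi - w))"
        using q1(2) by (auto simp: algebra_simps)
      then show False using pipj pij by auto
    qed
  qed
qed



lemma construct:
  fixes cs :: "'a::{metric_space, ab_group_add} list"
  assumes binf: "\<And>(x :: 'a) r. r > 0 \<Longrightarrow> infinite (ball x r)" and r: "r > 0"
  shows "\<exists>B. finite B \<and> weakG B \<and> card B = length cs \<and> (\<forall>c\<in>set cs. \<exists>b\<in>B. dist c b < r)
            \<and> (\<forall>b\<in>B. \<exists>c\<in>set cs. dist c b < r)"
proof (induction cs)
  case Nil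
  then show ?case by (intro exI[of _ "{}"]) (simp add: weakG_empty)
next
  case (Cons c cs)
  then obtain B where B: "finite B" "weakG B" "card B = length cs" "\<forall>c\<in>set cs. \<exists>b\<in>B. dist c b < r"
    "\<forall>b\<in>B. \<exists>c\<in>set cs. dist c b < r" by blast
  define F where "F = B \<union> {x. \<exists>a\<in>B. \<exists>b\<in>B. \<exists>c\<in>B. a + x = b + c}"
  have "finite F" unfolding F_def using B(1) bad_finite by blast
  then have "\<not> ball c r \<subseteq> F" using binf[OF r, of c] finite_subset[of "ball c r" F] by blast
  then obtain x where x: "x \<in> ball c r" "x \<notin> F" by blast
  have "weakG (insert x B)"
    using x(2) B(2) unfolding F_def by (intro weakG_insert) blast+
  moreover have "card (insert x B) = length (c # cs)" using x(2) B(1,3) unfolding F_def by simp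
  moreover have "\<forall>c'\<in>set (c#cs). \<exists>b\<in>insert x B. dist c' b < r" using B(4) x(1) by auto
  moreover have "\<forall>b\<in>insert x B. \<exists>c'\<in>set (c#cs). dist c' b < r" using B(5) x(1) by auto
  ultimately show ?case using B(1) by (intro exI[of _ "insert x B"]) simp
qed

lemma infdist_lessE:
  assumes "B \<noteq> {}" "infdist x B < d"
  obtains b where "b \<in> B" "dist x b < d"
proof -
  have "Inf ((\<lambda>b. dist x b) ` B) < d" using assms by (simp add: infdist_notempty)
  moreover have "(\<lambda>b. dist x b) ` B \<noteq> {}" using assms(1) by simp
  ultimately obtain y where "y \<in> (\<lambda>b. dist x b) ` B" "y < d" using cInf_lessD by metis
  then show ?thesis using that by blast
qed

lemma bdd_infdist:
  fixes A B :: "'a::metric_space set"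
  assumes "compact A" "B \<noteq> {}"
  shows "bdd_above ((\<lambda>a. infdist a B) ` A)"
proof (cases "A = {}")
  case True then show ?thesis by simp
next
  case False
  then obtain a0 where a0: "a0 \<in> A" by blast
  obtain b0 where b0: "b0 \<in> B" using assms by blast
  obtain e where e: "\<forall>y\<in>A. dist a0 y \<le> e" using bounded_any_center[of A a0] compact_imp_bounded[OF assms(1)] by blast
  show ?thesis
  proof (rule bdd_aboveI2)
    fix a assume "a \<in> A"
    have "infdist a B \<le> dist a b0" using b0 by (rule infdist_le)
    also have "\<dots> \<le> dist a a0 + dist a0 b0" by (rule dist_triangle)
    also have "\<dots> \<le> e + dist a0 b0" using e \<open>a\<in>A\<close> by (simp add: dist_commute) (metis dist_commute)
    finally show "infdist a B \<le> e + dist a0 b0" .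
  qed
qed

lemma hd_left:
  fixes A B :: "'a::metric_space set"
  assumes "compact A" "B \<noteq> {}" "hausdorff_dist A B < d" "a \<in> A"
  shows "infdist a B < d"
proof -
  have "infdist a B \<le> (SUP a\<in>A. infdist a B)" using bdd_infdist[OF assms(1,2)] assms(4) by (rule cSUP_upper2) simp
  then show ?thesis using assms(3) unfolding hausdorff_dist_def by linarith
qed

lemma hd_right:
  fixes A B :: "'a::metric_space set"
  assumes "compact B" "A \<noteq> {}" "hausdorff_dist A B < d" "b \<in> B"
  shows "infdist b A < d"
proof -
  have "infdist b A \<le> (SUP b\<in>B. infdist b A)" using bdd_infdist[OF assms(1,2)] assms(4) by (rule cSUP_upper2) simp
  then show ?thesis using assms(3) unfolding hausdorff_dist_def by linarith
qed

lemma hd_le: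
  fixes A B :: "'a::metric_space set"
  assumes "A \<noteq> {}" "B \<noteq> {}" "\<And>a. a \<in> A \<Longrightarrow> infdist a B \<le> d" "\<And>b. b \<in> B \<Longrightarrow> infdist b A \<le> d"
  shows "hausdorff_dist A B \<le> d"
  unfolding hausdorff_dist_def using assms by (auto intro!: cSUP_least)



context tinv begin

lemma dir1:
  fixes A :: "'a set"
  assumes binf: "\<And>(x :: 'a) r. r > 0 \<Longrightarrow> infinite (ball x r)"
    and A: "A \<in> Kfam"
    and cont: "\<forall>\<epsilon>>0. \<exists>\<delta>>0. \<forall>B\<in>Kfam. hausdorff_dist A B < \<delta> \<longrightarrow>
            hausdorff_dist (spectre A) (spectre B) < \<epsilon>"
  shows "spectre A = {0}"
proof (rule ccontr)
  assume ne: "spectre A \<noteq> {0}"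
  have Ane: "A \<noteq> {}" and Ac: "compact A" using A by (auto simp: Kfam_def)
  have "0 \<in> spectre A" by (simp add: spectre_def)
  then obtain z where z: "z \<in> spectre A" "z \<noteq> 0" using ne by blast
  define \<epsilon> where "\<epsilon> = dist z 0"
  have \<epsilon>: "\<epsilon> > 0" using z by (simp add: \<epsilon>_def)
  then obtain \<delta> where \<delta>: "\<delta> > 0" "\<forall>B\<in>Kfam. hausdorff_dist A B < \<delta> \<longrightarrow>
            hausdorff_dist (spectre A) (spectre B) < \<epsilon>" using cont by blast
  define r where "r = \<delta> / 3"
  have r: "r > 0" using \<delta> by (simp add: r_def)
  have "A \<subseteq> (\<Union>a\<in>A. ball a r)" using r by auto
  then obtain P where P: "P \<subseteq> A" "finite P" "A \<subseteq> (\<Union>p\<in>P. ball p r)"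
    using compactE_image[OF Ac, of A "\<lambda>a. ball a r"] by auto
  obtain ps where ps: "set ps = P" using finite_list[OF P(2)] by blast
  obtain p0 where p0: "p0 \<in> A" using Ane by blast
  define cs where "cs = replicate 4 p0 @ ps"
  have csA: "set cs \<subseteq> A" using P(1) ps p0 by (auto simp: cs_def)
  obtain B where B: "finite B" "weakG B" "card B = length cs" "\<forall>c\<in>set cs. \<exists>b\<in>B. dist c b < r"
    "\<forall>b\<in>B. \<exists>c\<in>set cs. dist c b < r" using construct[OF binf r, of cs] by blast
  have c4: "card B \<ge> 4" using B(3) by (simp add: cs_def)
  then have Bne: "B \<noteq> {}" by auto
  have BK: "B \<in> Kfam" using B(1) Bne by (simp add: Kfam_def finite_imp_compact)
  have "hausdorff_dist A B \<le> 2 * r"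
  proof (rule hd_le[OF Ane Bne])
    fix a assume a: "a \<in> A"
    then obtain p where p: "p \<in> P" "dist p a < r" using P(3) by auto
    then have "p \<in> set cs" using ps by (simp add: cs_def)
    then obtain b where b: "b \<in> B" "dist p b < r" using B(4) by blast
    have "infdist a B \<le> dist a b" using b(1) by (rule infdist_le)
    also have "\<dots> \<le> dist a p + dist p b" by (rule dist_triangle)
    finally show "infdist a B \<le> 2 * r" using p b by (simp add: dist_commute)
  next
    fix b assume b: "b \<in> B"
    then obtain c where c: "c \<in> set cs" "dist c b < r" using B(5) by blast
    have "infdist b A \<le> dist b c" using c(1) csA by (intro infdist_le) auto
    then show "infdist b A \<le> 2 * r" using c r by (simp add: dist_commute)
  qed
  then have "hausdorff_dist A B < \<delta>" using r by (simp add: r_def)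
  then have lt: "hausdorff_dist (spectre A) {0} < \<epsilon>"
    using \<delta>(2) BK spectre_weakG[OF B(1,2) c4] by auto
  obtain e where e: "\<forall>y\<in>A. dist p0 y \<le> e" using bounded_any_center[of A p0] compact_imp_bounded[OF Ac] by blast
  have bdd: "bdd_above ((\<lambda>s. infdist s {0}) ` spectre A)"
  proof (rule bdd_aboveI2)
    fix s assume "s \<in> spectre A"
    then have "p0 + s \<in> A \<or> p0 - s \<in> A" using p0 by (auto simp: spectre_def)
    then have "dist p0 (p0 + s) \<le> e \<or> dist p0 (p0 - s) \<le> e" using e by blast
    then show "infdist s {0} \<le> e" using L1[of p0 s] L2[of p0 s] by (auto simp: dist_commute)
  qed
  have "\<epsilon> \<le> (SUP s\<in>spectre A. infdist s {0})"
    using cSUP_upper[OF z(1) bdd] by (simp add: \<epsilon>_def)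
  also have "\<dots> \<le> hausdorff_dist (spectre A) {0}" by (simp add: hausdorff_dist_def)
  finally show False using lt by simp
qed

end


context tinv begin

lemma compact_diff:
  fixes A :: "'a set"
  assumes "compact A"
  shows "compact ((\<lambda>(a,b). a - b) ` (A \<times> A))"
proof (rule compact_continuous_image)
  show "compact (A \<times> A)" using assms by (intro compact_Times)
  show "continuous_on (A \<times> A) (\<lambda>(a, b). a - b)"
    unfolding continuous_on_iff
  proof (intro ballI allI impI)
    fix x :: "'a \<times> 'a" and e :: real assume "e > 0"
    show "\<exists>d>0. \<forall>x'\<in>A \<times> A. dist x' x < d \<longrightarrow> dist ((\<lambda>(a, b). a - b) x') ((\<lambda>(a, b). a - b) x) < e"
    proof (intro exI[of _ "e/2"] conjI ballI impI)
      show "e/2 > 0" using \<open>e > 0\<close> by simp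
      fix x' assume "x' \<in> A \<times> A" "dist x' x < e/2"
      have "dist ((\<lambda>(a, b). a - b) x') ((\<lambda>(a, b). a - b) x) \<le> dist (fst x') (fst x) + dist (snd x') (snd x)"
        using L7[of "fst x'" "snd x'" "fst x" "snd x"] by (simp add: case_prod_beta)
      also have "\<dots> \<le> dist x' x + dist x' x" using dist_fst_le[of x' x] dist_snd_le[of x' x] by linarith
      finally show "dist ((\<lambda>(a, b). a - b) x') ((\<lambda>(a, b). a - b) x) < e" using \<open>dist x' x < e/2\<close> by linarith
    qed
  qed
qed

lemma dir2:
  fixes A :: "'a set"
  assumes A: "A \<in> Kfam" and SA: "spectre A = {0}"
  shows "\<forall>\<epsilon>>0. \<exists>\<delta>>0. \<forall>B\<in>Kfam. hausdorff_dist A B < \<delta> \<longrightarrow>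
            hausdorff_dist (spectre A) (spectre B) < \<epsilon>"
proof (intro allI impI)
  fix \<epsilon> :: real assume \<epsilon>: "\<epsilon> > 0"
  have Ane: "A \<noteq> {}" and Ac: "compact A" using A by (auto simp: Kfam_def)
  have Acl: "closed A" using Ac by (rule compact_imp_closed)
  define K where "K = (\<lambda>(a,b). a - b) ` (A \<times> A)"
  define K' where "K' = K \<inter> - ball 0 (\<epsilon>/4)"
  have K'c: "compact K'" unfolding K'_def K_def
    using compact_diff[OF Ac] by (intro compact_Int_closed) auto
  have "\<forall>z\<in>K'. \<exists>a. a \<in> A \<and> a + z \<notin> A \<and> a - z \<notin> A"
  proof
    fix z assume "z \<in> K'"
    then have "z \<noteq> 0" using \<epsilon> by (auto simp: K'_def)
    then have "z \<notin> spectre A" using SA by auto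
    then show "\<exists>a. a \<in> A \<and> a + z \<notin> A \<and> a - z \<notin> A" by (auto simp: spectre_def)
  qed
  then obtain aa where aa: "\<And>z. z \<in> K' \<Longrightarrow> aa z \<in> A \<and> aa z + z \<notin> A \<and> aa z - z \<notin> A" by metis
  define m where "m z = min (infdist (aa z + z) A) (infdist (aa z - z) A)" for z
  have mpos: "m z > 0" if "z \<in> K'" for z
    using aa[OF that] infdist_pos_not_in_closed[OF Acl Ane] by (simp add: m_def)
  have "K' \<subseteq> (\<Union>z\<in>K'. ball z (m z / 4))" using mpos by force
  then obtain T where T: "T \<subseteq> K'" "finite T" "K' \<subseteq> (\<Union>z\<in>T. ball z (m z / 4))"
    using compactE_image[OF K'c, of K' "\<lambda>z. ball z (m z / 4)"] by auto
  define \<eta> where "\<eta> = Min (insert 1 (m ` T)) / 4"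
  have \<eta>pos: "\<eta> > 0" using T mpos by (auto simp: \<eta>_def)
  have \<eta>le: "\<eta> \<le> m z / 4" if "z \<in> T" for z
    using T(2) that by (auto simp: \<eta>_def)
  define \<delta> where "\<delta> = min (\<epsilon>/16) (\<eta>/2)"
  have \<delta>: "\<delta> > 0" using \<epsilon> \<eta>pos by (simp add: \<delta>_def)
  show "\<exists>\<delta>>0. \<forall>B\<in>Kfam. hausdorff_dist A B < \<delta> \<longrightarrow>
            hausdorff_dist (spectre A) (spectre B) < \<epsilon>"
  proof (intro exI[of _ \<delta>] conjI ballI impI)
    show "\<delta> > 0" by (rule \<delta>)
    fix B :: "'a set" assume BK: "B \<in> Kfam" and h: "hausdorff_dist A B < \<delta>"
    have Bne: "B \<noteq> {}" and Bc: "compact B" using BK by (auto simp: Kfam_def)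
    have nearB: "\<exists>b\<in>B. dist a b < \<delta>" if "a \<in> A" for a
      using hd_left[OF Ac Bne h that] by (metis infdist_lessE[OF Bne])
    have nearA: "\<exists>a\<in>A. dist b a < \<delta>" if "b \<in> B" for b
      using hd_right[OF Bc Ane h that] by (metis infdist_lessE[OF Ane])
    have idB: "infdist b A < \<delta>" if "b \<in> B" for b
      using hd_right[OF Bc Ane h that] .
    have small: "dist w 0 < \<epsilon>/2" if w: "w \<in> spectre B" for w
    proof (rule ccontr)
      assume "\<not> dist w 0 < \<epsilon>/2"
      then have wbig: "dist w 0 \<ge> \<epsilon>/2" by simp
      obtain b0 where b0: "b0 \<in> B" using Bne by blast
      obtain b1 where b1: "b1 \<in> B" "b1 = b0 + w \<or> b1 = b0 - w" using w b0 unfolding spectre_def by blast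
      obtain a0 where a0: "a0 \<in> A" "dist b0 a0 < \<delta>" using nearA b0 by blast
      obtain a1 where a1: "a1 \<in> A" "dist b1 a1 < \<delta>" using nearA b1 by blast
      have "\<exists>k\<in>K. dist w k < 2 * \<delta>"
      proof (cases "b1 = b0 + w")
        case True
        then have "w = b1 - b0" by (simp add: algebra_simps)
        moreover have "a1 - a0 \<in> K" using a0 a1 by (force simp: K_def)
        moreover have "dist (b1 - b0) (a1 - a0) < 2 * \<delta>" using L7[of b1 b0 a1 a0] a0 a1 by linarith
        ultimately show ?thesis by blast
      next
        case False
        then have "w = b0 - b1" using b1 by (simp add: algebra_simps)
        moreover have "a0 - a1 \<in> K" using a0 a1 by (force simp: K_def)
        moreover have "dist (b0 - b1) (a0 - a1) < 2 * \<delta>" using L7[of b0 b1 a0 a1] a0 a1 by linarith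
        ultimately show ?thesis by blast
      qed
      then obtain k where k: "k \<in> K" "dist w k < 2 * \<delta>" by blast
      have "dist w 0 \<le> dist w k + dist k 0" by (rule dist_triangle)
      moreover have "\<delta> \<le> \<epsilon>/16" by (simp add: \<delta>_def)
      ultimately have "dist k 0 \<ge> \<epsilon>/4" using wbig k(2) \<epsilon> by linarith
      then have "k \<in> K'" using k(1) by (auto simp: K'_def dist_commute)
      then obtain z where z: "z \<in> T" "dist z k < m z / 4" using T(3) by auto
      have zK: "z \<in> K'" using z T(1) by auto
      have dzw: "dist z w < m z / 2"
      proof -
        have "dist z w \<le> dist z k + dist k w" by (rule dist_triangle)
        moreover have "2 * \<delta> \<le> \<eta>" by (simp add: \<delta>_def)
        ultimately show ?thesis using z(2) k(2) \<eta>le[OF z(1)] by (simp add: dist_commute)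
      qed
      define a where "a = aa z"
      have aA: "a \<in> A" using aa[OF zK] by (simp add: a_def)
      obtain b where b: "b \<in> B" "dist a b < \<delta>" using nearB[OF aA] by blast
      have "b + w \<in> B \<or> b - w \<in> B" using w b(1) unfolding spectre_def by blast
      then show False
      proof
        assume bw: "b + w \<in> B"
        have "infdist (a + z) A \<le> infdist (b + w) A + dist (a + z) (b + w)" by (rule infdist_triangle)
        moreover have "dist (a + z) (b + w) \<le> dist a b + dist z w" by (rule L8)
        moreover have "infdist (b + w) A < \<delta>" using idB[OF bw] .
        moreover have "m z \<le> infdist (a + z) A" by (simp add: m_def a_def)
        moreover have "2 * \<delta> \<le> \<eta>" by (simp add: \<delta>_def)
        ultimately show False using b(2) dzw \<eta>le[OF z(1)] mpos[OF zK] by linarith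
      next
        assume bw: "b - w \<in> B"
        have "infdist (a - z) A \<le> infdist (b - w) A + dist (a - z) (b - w)" by (rule infdist_triangle)
        moreover have "dist (a - z) (b - w) \<le> dist a b + dist z w" by (rule L7)
        moreover have "infdist (b - w) A < \<delta>" using idB[OF bw] .
        moreover have "m z \<le> infdist (a - z) A" by (simp add: m_def a_def)
        moreover have "2 * \<delta> \<le> \<eta>" by (simp add: \<delta>_def)
        ultimately show False using b(2) dzw \<eta>le[OF z(1)] mpos[OF zK] by linarith
      qed
    qed
    have zB: "0 \<in> spectre B" by (simp add: spectre_def)
    have "hausdorff_dist {0} (spectre B) \<le> \<epsilon>/2"
    proof (rule hd_le)
      show "{0} \<noteq> {}" by simp
      show "spectre B \<noteq> {}" using zB by blast
      fix x assume "x \<in> {0::'a}" then show "infdist x (spectre B) \<le> \<epsilon>/2" using zB \<epsilon> by simp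
    next
      fix w assume "w \<in> spectre B" then show "infdist w {0} \<le> \<epsilon>/2" using small by fastforce
    qed
    then show "hausdorff_dist (spectre A) (spectre B) < \<epsilon>" using SA \<epsilon> by simp
  qed
qed

end

theorem theorem3p10:
  fixes A :: "'a::{metric_space, ab_group_add} set"
  assumes transl_inv: "\<And>x y z :: 'a. dist x y = dist (x + z) (y + z)"
    and complete: "complete (UNIV :: 'a set)"
    and loc_compact: "locally compact (UNIV :: 'a set)"
    and balls_infinite: "\<And>(x :: 'a) r. r > 0 \<Longrightarrow> infinite (ball x r)"
    and A: "A \<in> Kfam"
  shows "(\<forall>\<epsilon>>0. \<exists>\<delta>>0. \<forall>B\<in>Kfam. hausdorff_dist A B < \<delta> \<longrightarrow>
            hausdorff_dist (spectre A) (spectre B) < \<epsilon>)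
         \<longleftrightarrow> spectre A = {0}"
proof -
  interpret tinv using transl_inv by unfold_locales
  show ?thesis using dir1[OF balls_infinite A] dir2[OF A] by blast
qed

end
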